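(* Let $G_m$ be a bounded Vilenkin group. There is a constant $c>0$ depending only on $m$ such that for every integer $A\ge3$, with $q_A:=M_{2A}+M_{2A-2}+\dots+M_2+M_0$ and $f_A:=D_{M_{2A+1}}-D_{M_{2A}}$, $$\int_{G_m}|\sigma_{q_A}f_A(x)|^{1/2}\,d\mu(x)\ge \frac{c\,A}{\sqrt{M_{2A}}}.$$
   Context: Let $m=(m_0,m_1,\dots)$ be integers $m_k\ge2$ with $\sup_km_k<\infty$; $G_m=\prod_kZ_{m_k}$ with the product of uniform probability measures $\mu$. $M_0=1$, $M_{k+1}=m_kM_k$; $n=\sum_jn_jM_j$, $n_j\in Z_{m_j}$. $r_k(x)=\exp(2\pi ix_k/m_k)$, $\psi_n=\prod_kr_k^{n_k}$, $D_n=\sum_{k=0}^{n-1}\psi_k$. For $f\in L_1(G_m)$: $\hat f(i)=\int f\overline{\psi_i}d\mu$, $S_nf=\sum_{k=0}^{n-1}\hat f(k)\psi_k$ ($S_0f=0$), $\sigma_nf=\frac1n\sum_{k=0}^{n-1}S_kf$. *)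

theory Defs
  imports "HOL-Probability.Probability"
begin

definition vil_measure :: "(nat \<Rightarrow> nat) \<Rightarrow> (nat \<Rightarrow> nat) measure" where
  "vil_measure m = PiM UNIV (\<lambda>k. uniform_count_measure {0..<m k})"

definition vilM :: "(nat \<Rightarrow> nat) \<Rightarrow> nat \<Rightarrow> nat" where
  "vilM m k = (\<Prod>j<k. m j)"

definition vil_digit :: "(nat \<Rightarrow> nat) \<Rightarrow> nat \<Rightarrow> nat \<Rightarrow> nat" where
  "vil_digit m n k = (n div vilM m k) mod m k"

definition vil_r :: "(nat \<Rightarrow> nat) \<Rightarrow> nat \<Rightarrow> (nat \<Rightarrow> nat) \<Rightarrow> complex" where
  "vil_r m k x = exp (2 * pi * \<i> * of_nat (x k) / of_nat (m k))"

text \<open>Vilenkin character psi_n; digits n_k vanish for k \<ge> n since M_k \<ge> 2^k > n.\<close>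
definition vil_psi :: "(nat \<Rightarrow> nat) \<Rightarrow> nat \<Rightarrow> (nat \<Rightarrow> nat) \<Rightarrow> complex" where
  "vil_psi m n x = (\<Prod>k<n. vil_r m k x ^ vil_digit m n k)"

definition vil_D :: "(nat \<Rightarrow> nat) \<Rightarrow> nat \<Rightarrow> (nat \<Rightarrow> nat) \<Rightarrow> complex" where
  "vil_D m n x = (\<Sum>k<n. vil_psi m k x)"

definition vil_fourier :: "(nat \<Rightarrow> nat) \<Rightarrow> ((nat \<Rightarrow> nat) \<Rightarrow> complex) \<Rightarrow> nat \<Rightarrow> complex" where
  "vil_fourier m f i = integral\<^sup>L (vil_measure m) (\<lambda>x. f x * cnj (vil_psi m i x))"

definition vil_S :: "(nat \<Rightarrow> nat) \<Rightarrow> nat \<Rightarrow> ((nat \<Rightarrow> nat) \<Rightarrow> complex) \<Rightarrow> (nat \<Rightarrow> nat) \<Rightarrow> complex" where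
  "vil_S m n f x = (\<Sum>k<n. vil_fourier m f k * vil_psi m k x)"

definition vil_sigma :: "(nat \<Rightarrow> nat) \<Rightarrow> nat \<Rightarrow> ((nat \<Rightarrow> nat) \<Rightarrow> complex) \<Rightarrow> (nat \<Rightarrow> nat) \<Rightarrow> complex" where
  "vil_sigma m n f x = (\<Sum>k<n. vil_S m k f x) / of_nat n"

end

theory Submission imports Defs begin

lemma vilM_Suc: "vilM m (Suc k) = vilM m k * m k"
  by (simp add: vilM_def)

lemma vilM_dvd: assumes "k \<le> n" shows "vilM m k dvd vilM m n"
  using assms
proof (induction n)
  case 0 then show ?case by simp
next
  case (Suc n)
  then show ?case
    by (cases "k = Suc n") (auto simp: vilM_Suc)
qed

locale vil =
  fixes m :: "nat \<Rightarrow> nat"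
  assumes m2: "\<And>k. 2 \<le> m k"
begin

abbreviation "MM \<equiv> vilM m"
abbreviation "dig \<equiv> vil_digit m"
abbreviation "psi \<equiv> vil_psi m"
abbreviation "rr \<equiv> vil_r m"

lemma m_pos: "0 < m k" using m2[of k] by simp

lemma vilM_pos: "vilM m k > 0"
  by (simp add: vilM_def m_pos)

lemma vilM_ge2: "(2::nat)^k \<le> vilM m k"
proof (induction k)
  case 0 then show ?case by (simp add: vilM_def)
next
  case (Suc k)
  have "(2::nat)^Suc k = 2^k * 2" by simp
  also have "\<dots> \<le> vilM m k * m k" using Suc m2[of k] by (intro mult_mono) auto
  finally show ?case by (simp add: vilM_Suc)
qed

lemma lt_vilM: "k < vilM m k"
  using vilM_ge2[of k] less_exp[of k] by linarith

lemma vilM_mono: assumes "k \<le> n" shows "vilM m k \<le> vilM m n"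
  using vilM_dvd[OF assms] vilM_pos by (simp add: dvd_imp_le)

lemma dig_zero: assumes "n < MM k" shows "dig n k = 0"
  using assms by (simp add: vil_digit_def)

lemma dig_lt: "dig n k < m k"
  by (simp add: vil_digit_def m_pos)

lemma psi_ext: assumes "n < MM N"
  shows "psi n x = (\<Prod>k<N. rr k x ^ dig n k)"
proof -
  have "psi n x = (\<Prod>k<max n N. rr k x ^ dig n k)"
    unfolding vil_psi_def
  proof (rule prod.mono_neutral_left)
    show "\<forall>i\<in>{..<max n N} - {..<n}. rr i x ^ dig n i = 1"
    proof
      fix i assume "i \<in> {..<max n N} - {..<n}"
      then have "n \<le> i" by auto
      then have "n < MM i" using lt_vilM[of n] vilM_mono[of n i] by linarith
      then show "rr i x ^ dig n i = 1" by (simp add: dig_zero)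
    qed
  qed auto
  also have "\<dots> = (\<Prod>k<N. rr k x ^ dig n k)"
  proof (rule prod.mono_neutral_right)
    show "\<forall>i\<in>{..<max n N} - {..<N}. rr i x ^ dig n i = 1"
    proof
      fix i assume "i \<in> {..<max n N} - {..<N}"
      then have "N \<le> i" by auto
      then have "n < MM i" using assms vilM_mono[of N i] by linarith
      then show "rr i x ^ dig n i = 1" by (simp add: dig_zero)
    qed
  qed auto
  finally show ?thesis .
qed

lemma dig_split_low:
  assumes "k < n"
  shows "dig (a + MM n * b) k = dig a k"
proof -
  have "MM (Suc k) dvd MM n" using assms by (intro vilM_dvd) simp
  then obtain R where R: "MM n = MM k * m k * R" by (auto simp: vilM_Suc)
  have "(a + MM n * b) div MM k = a div MM k + m k * (R * b)"
    using vilM_pos[of k] by (simp add: R mult.assoc)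
  then show ?thesis by (simp add: vil_digit_def)
qed

lemma dig_split_high:
  assumes "n \<le> k" "a < MM n"
  shows "dig (a + MM n * b) k = dig (MM n * b) k"
proof -
  obtain R where R: "MM k = MM n * R" using vilM_dvd[OF assms(1)] by auto
  have "(a + MM n * b) div MM k = b div R"
    using vilM_pos[of n] assms(2) by (simp add: R div_mult2_eq)
  moreover have "(MM n * b) div MM k = b div R"
    using vilM_pos[of n] by (simp add: R div_mult2_eq)
  ultimately show ?thesis by (simp add: vil_digit_def)
qed

lemma psi_split:
  assumes "a < MM n"
  shows "psi (a + MM n * b) x = psi a x * psi (MM n * b) x"
proof -
  define N where "N = Suc (a + MM n * b)"
  have lt: "a + MM n * b < MM N" using lt_vilM[of N] by (simp add: N_def)
  have "psi (a + MM n * b) x = (\<Prod>k<N. rr k x ^ dig (a + MM n * b) k)"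
    by (rule psi_ext[OF lt])
  also have "\<dots> = (\<Prod>k<N. rr k x ^ dig a k * rr k x ^ dig (MM n * b) k)"
  proof (rule prod.cong[OF refl])
    fix k assume "k \<in> {..<N}"
    show "rr k x ^ dig (a + MM n * b) k = rr k x ^ dig a k * rr k x ^ dig (MM n * b) k"
    proof (cases "k < n")
      case True
      then show ?thesis using dig_split_low[OF True, of a b] dig_split_low[OF True, of 0 b]
        by (simp add: dig_zero vilM_pos)
    next
      case False
      then have "a < MM k" using assms vilM_mono[of n k] by simp
      then show ?thesis using dig_split_high[of n k a b] False assms by (simp add: dig_zero)
    qed
  qed
  also have "\<dots> = psi a x * psi (MM n * b) x"
    using lt by (simp add: prod.distrib psi_ext[of a N] psi_ext[of "MM n * b" N])
  finally show ?thesis .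
qed

lemma psi_block:
  assumes "b < m n"
  shows "psi (MM n * b) x = rr n x ^ b"
proof -
  have lt: "MM n * b < MM (Suc n)" using assms vilM_pos[of n] by (simp add: vilM_Suc)
  have "psi (MM n * b) x = (\<Prod>k<Suc n. rr k x ^ dig (MM n * b) k)"
    by (rule psi_ext[OF lt])
  also have "\<dots> = rr n x ^ b"
  proof -
    have "\<And>k. k < n \<Longrightarrow> dig (MM n * b) k = 0"
      using dig_split_low[of _ n 0 b] by (simp add: dig_zero vilM_pos)
    moreover have "dig (MM n * b) n = b" using assms vilM_pos[of n] by (simp add: vil_digit_def)
    ultimately show ?thesis by (simp add: prod.lessThan_Suc)
  qed
  finally show ?thesis .
qed

lemma psi_low:
  assumes "a < MM n" "\<And>t. t < n \<Longrightarrow> x t = 0"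
  shows "psi a x = 1"
  using assms by (simp add: psi_ext[OF assms(1)] vil_r_def)

lemma norm_rr[simp]: "norm (rr k x) = 1"
  unfolding vil_r_def by (simp add: norm_exp_eq_Re)

lemma norm_psi[simp]: "norm (psi n x) = 1"
  unfolding vil_psi_def by (simp add: prod_norm[symmetric] norm_power)


lemma dig_unique:
  assumes "\<And>t. t < N \<Longrightarrow> dig i t = dig j t"
  shows "i mod MM N = j mod MM N"
  using assms
proof (induction N)
  case 0 then show ?case by (simp add: vilM_def)
next
  case (Suc N)
  have "i mod MM (Suc N) = MM N * (i div MM N mod m N) + i mod MM N"
    by (simp add: vilM_Suc mod_mult2_eq)
  moreover have "j mod MM (Suc N) = MM N * (j div MM N mod m N) + j mod MM N"
    by (simp add: vilM_Suc mod_mult2_eq)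
  moreover have "i div MM N mod m N = j div MM N mod m N"
    using Suc.prems[of N] by (simp add: vil_digit_def)
  ultimately show ?case using Suc by simp
qed

end

lemma root_sum:
  fixes k :: int and n :: nat
  assumes "0 < n" "\<not> int n dvd k"
  shows "(\<Sum>y<n. exp (2 * pi * \<i> * of_int k / of_nat n) ^ y) = 0"
proof -
  define w where "w = exp (2 * pi * \<i> * of_int k / of_nat n)"
  have "w ^ n = exp (of_nat n * (2 * pi * \<i> * of_int k / of_nat n))"
    unfolding w_def by (rule exp_of_nat_mult[symmetric])
  also have "\<dots> = exp (2 * pi * \<i> * of_int k)" by (rule arg_cong[where f=exp]) (use assms(1) in simp)
  also have "\<dots> = 1" by (simp add: exp_eq_1)
  finally have wn: "w ^ n = 1" .
  have "w \<noteq> 1"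
  proof
    assume "w = 1"
    then obtain j :: int where j: "2 * pi * of_int k / of_nat n = of_int (2 * j) * pi"
      by (auto simp: w_def exp_eq_1)
    then have "of_int k = real n * of_int j" using assms(1) by (simp add: field_simps)
    then have "k = int n * j" by (metis of_int_eq_iff of_int_mult of_int_of_nat_eq)
    then show False using assms(2) by simp
  qed
  then have "(\<Sum>y<n. w ^ y) = 0" using wn by (simp add: sum_gp_strict)
  then show ?thesis unfolding w_def .
qed

lemma exp_term:
  fixes a b y n :: nat
  shows "exp (2 * pi * \<i> * of_nat y / of_nat n) ^ a * cnj (exp (2 * pi * \<i> * of_nat y / of_nat n) ^ b)
     = exp (2 * pi * \<i> * of_int (int a - int b) / of_nat n) ^ y"
proof -
  have "exp (2 * pi * \<i> * of_nat y / of_nat n) ^ a * cnj (exp (2 * pi * \<i> * of_nat y / of_nat n) ^ b)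
     = exp (of_nat a * (2 * pi * \<i> * of_nat y / of_nat n) + of_nat b * cnj (2 * pi * \<i> * of_nat y / of_nat n))"
    by (simp only: exp_of_nat_mult[symmetric] complex_cnj_power[symmetric] exp_cnj exp_add
         complex_cnj_power)
       (simp add: exp_of_nat_mult complex_cnj_power exp_cnj[symmetric])
  also have "\<dots> = exp (of_nat y * (2 * pi * \<i> * of_int (int a - int b) / of_nat n))"
    by (rule arg_cong[where f=exp]) (simp add: algebra_simps diff_divide_distrib)
  also have "\<dots> = exp (2 * pi * \<i> * of_int (int a - int b) / of_nat n) ^ y"
    by (rule exp_of_nat_mult)
  finally show ?thesis .
qed


lemma int_ucm:
  fixes f :: "'a \<Rightarrow> complex"
  assumes "finite A"
  shows "integral\<^sup>L (uniform_count_measure A) f = (\<Sum>x\<in>A. f x) / of_nat (card A)"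
  using assms
  by (simp add: uniform_count_measure_def lebesgue_integral_point_measure_finite scaleR_conv_of_real
      sum_divide_distrib)

lemma int_dvd_diff_lt:
  fixes a b n :: nat
  assumes "a < n" "b < n" "int n dvd (int a - int b)"
  shows "a = b"
proof -
  obtain c where c: "int a - int b = int n * c" using assms(3) by auto
  show ?thesis
  proof (cases "c = 0")
    case True then show ?thesis using c by simp
  next
    case False
    then have "\<bar>int n * c\<bar> \<ge> int n" by (simp add: abs_mult mult_le_cancel_left1) (smt (verit) of_nat_0_le_iff mult_le_cancel_left1)
    then show ?thesis using c assms(1,2) by linarith
  qed
qed

context vil begin

abbreviation "UM t \<equiv> uniform_count_measure {0..<m t}"
abbreviation "mu \<equiv> vil_measure m"

lemma prob_UM: "prob_space (UM t)"
  by (rule prob_space_uniform_count_measure) (use m_pos[of t] in auto)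

sublocale PP: product_prob_space UM UNIV
proof -
  show "product_prob_space UM"
    by (intro product_prob_space.intro product_prob_space_axioms.intro product_sigma_finite.intro
        prob_UM prob_space_imp_sigma_finite)
qed

lemma mu_eq: "mu = PiM UNIV UM" by (simp add: vil_measure_def)

lemma prob_mu: "prob_space mu" unfolding mu_eq by (rule PP.P.prob_space_axioms)

lemma meas_UM: "g \<in> borel_measurable (UM t)"
  by (subst measurable_cong_sets[OF sets_uniform_count_measure_count_space refl])
     (rule borel_measurable_count_space)

lemma meas_coord: "(\<lambda>x. g (x t)) \<in> borel_measurable (PiM J UM)" if "t \<in> J"
  by (rule measurable_compose[OF measurable_component_singleton[OF that] meas_UM])

lemma meas_rr: "(\<lambda>x. rr k x ^ d) \<in> borel_measurable (PiM J UM)" if "k \<in> J"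
  unfolding vil_r_def
  using meas_coord[OF that, of "\<lambda>y. exp (2 * pi * \<i> * of_nat y / of_nat (m k)) ^ d"] by simp

lemma meas_psi: "psi n \<in> borel_measurable mu"
  unfolding vil_psi_def mu_eq
  by (intro borel_measurable_prod meas_rr) auto

lemma int_UM:
  fixes a b :: nat
  assumes "a < m t" "b < m t"
  shows "(\<integral>y. exp (2 * pi * \<i> * of_nat y / of_nat (m t)) ^ a * cnj (exp (2 * pi * \<i> * of_nat y / of_nat (m t)) ^ b) \<partial>UM t)
     = (if a = b then 1 else 0)"
proof -
  have "(\<integral>y. exp (2 * pi * \<i> * of_nat y / of_nat (m t)) ^ a * cnj (exp (2 * pi * \<i> * of_nat y / of_nat (m t)) ^ b) \<partial>UM t)
     = (\<Sum>y<m t. exp (2 * pi * \<i> * of_int (int a - int b) / of_nat (m t)) ^ y) / of_nat (m t)"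
    by (subst int_ucm) (simp_all only: finite_atLeastLessThan exp_term atLeast0LessThan finite_lessThan card_lessThan)
  also have "\<dots> = (if a = b then 1 else 0)"
  proof (cases "a = b")
    case True then show ?thesis using m_pos[of t] by simp
  next
    case False
    have "\<not> int (m t) dvd (int a - int b)" using int_dvd_diff_lt[OF assms] False by blast
    then show ?thesis using root_sum[of "m t" "int a - int b"] m_pos[of t] False by simp
  qed
  finally show ?thesis .
qed

lemma orth: "(\<integral>x. psi j x * cnj (psi i x) \<partial>mu) = (if i = j then 1 else 0)"
proof -
  define N where "N = Suc (i + j)"
  have iN: "i < MM N" "j < MM N" using lt_vilM[of N] by (auto simp: N_def)
  define g where "g t y = exp (2 * pi * \<i> * of_nat y / of_nat (m t)) ^ dig j t *
     cnj (exp (2 * pi * \<i> * of_nat y / of_nat (m t)) ^ dig i t)" for t y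
  have eq: "psi j x * cnj (psi i x) = (\<Prod>t<N. g t (x t))" for x
    using psi_ext[OF iN(1)] psi_ext[OF iN(2)] by (simp add: g_def vil_r_def prod.distrib)
  have gmeas: "(\<lambda>z. \<Prod>t<N. g t (z t)) \<in> borel_measurable (PiM {..<N} UM)"
    by (intro borel_measurable_prod meas_coord) auto
  have "(\<integral>x. psi j x * cnj (psi i x) \<partial>mu) = (\<integral>x. (\<Prod>t<N. g t (restrict x {..<N} t)) \<partial>mu)"
    by (simp add: eq)
  also have "\<dots> = (\<integral>z. (\<Prod>t<N. g t (z t)) \<partial>(distr mu (PiM {..<N} UM) (\<lambda>x. restrict x {..<N})))"
    unfolding mu_eq by (rule integral_distr[OF measurable_restrict_subset gmeas, symmetric]) simp
  also have "distr mu (PiM {..<N} UM) (\<lambda>x. restrict x {..<N}) = PiM {..<N} UM"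
    unfolding mu_eq by (rule PP.distr_PiM_restrict_finite) auto
  also have "(\<integral>z. (\<Prod>t<N. g t (z t)) \<partial>PiM {..<N} UM) = (\<Prod>t<N. integral\<^sup>L (UM t) (g t))"
  proof (rule PP.product_integral_prod)
    fix t
    show "integrable (UM t) (g t)"
      by (rule PP.M.integrable_const_bound[where B=1]) (auto simp: g_def norm_mult norm_power norm_exp_eq_Re intro!: AE_I2 meas_UM)
  qed auto
  also have "\<dots> = (\<Prod>t<N. if dig j t = dig i t then 1 else 0)"
    unfolding g_def by (rule prod.cong[OF refl], rule int_UM[OF dig_lt dig_lt])
  also have "\<dots> = (if i = j then 1 else 0)"
  proof (cases "i = j")
    case True then show ?thesis by simp
  next
    case False
    have "\<exists>t<N. dig j t \<noteq> dig i t"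
    proof (rule ccontr)
      assume "\<not> ?thesis"
      then have "i mod MM N = j mod MM N" by (intro dig_unique) auto
      then show False using iN False by simp
    qed
    then show ?thesis using False by (auto intro!: prod_zero)
  qed
  finally show ?thesis .
qed

end


lemma sum_split: "(\<Sum>i<a+b. h i) = (\<Sum>i<a. h i) + (\<Sum>j<b. h (a + j))"
  for h :: "nat \<Rightarrow> 'a::comm_monoid_add"
  by (induction b) (simp_all add: add.assoc)

lemma sum_blocks: "(\<Sum>j<p*N. g j) = (\<Sum>b<N. \<Sum>a<p. g (a + p*b))"
  for g :: "nat \<Rightarrow> 'a::comm_monoid_add"
proof (induction N)
  case 0 then show ?case by simp
next
  case (Suc N)
  have "(\<Sum>j<p*Suc N. g j) = (\<Sum>j<p*N + p. g j)" by (simp add: add.commute)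
  also have "\<dots> = (\<Sum>j<p*N. g j) + (\<Sum>a<p. g (p*N + a))" by (rule sum_split)
  finally show ?case using Suc by (simp add: add.commute)
qed

lemma sum_tri: "(\<Sum>k<q. \<Sum>i<k. h i) = (\<Sum>i<q. of_nat (q - 1 - i) * h i)"
  for h :: "nat \<Rightarrow> complex"
proof (induction q)
  case 0 then show ?case by simp
next
  case (Suc q)
  have "(\<Sum>k<Suc q. \<Sum>i<k. h i) = (\<Sum>i<q. of_nat (q - 1 - i) * h i) + (\<Sum>i<q. h i)"
    using Suc by simp
  also have "\<dots> = (\<Sum>i<q. of_nat (q - i) * h i)"
    by (subst sum.distrib[symmetric], rule sum.cong[OF refl])
       (auto simp: algebra_simps of_nat_diff Suc_diff_Suc)
  also have "\<dots> = (\<Sum>i<Suc q. of_nat (Suc q - 1 - i) * h i)" by simp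
  finally show ?case .
qed

lemma Z_alg:
  fixes K \<rho> \<tau> :: complex and p mm m' :: nat
  assumes r: "(\<Sum>b<mm. \<rho> ^ b) = 0" and t: "(\<Sum>c<m'. \<tau> ^ c) = 0"
  shows "(\<Sum>c<m'. \<Sum>b<mm. \<Sum>a<p. (K - of_nat (a + p*(b + mm*c))) * (\<rho>^b * \<tau>^c)) = 0"
proof -
  define S where "S = (\<Sum>a<p. of_nat a :: complex)"
  define T where "T = (\<Sum>b<mm. of_nat b * \<rho>^b)"
  have inner: "(\<Sum>a<p. (K - of_nat (a + p*(b + mm*c))) * (\<rho>^b * \<tau>^c)) =
      ((of_nat p * K - S - of_nat (p*p*mm*c)) * \<rho>^b - of_nat (p*p) * (of_nat b * \<rho>^b)) * \<tau>^c" for b c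
  proof -
    have "(\<Sum>a<p. (K - of_nat (a + p*(b + mm*c))) * (\<rho>^b * \<tau>^c)) =
        (\<Sum>a<p. (K - of_nat (a + p*(b + mm*c)))) * (\<rho>^b * \<tau>^c)"
      by (simp only: sum_distrib_right)
    also have "(\<Sum>a<p. (K - of_nat (a + p*(b + mm*c)))) = (\<Sum>a<p. (K - of_nat (p*(b + mm*c))) - of_nat a)"
      by (rule sum.cong) (simp_all add: algebra_simps)
    also have "(\<Sum>a<p. (K - of_nat (p*(b + mm*c))) - of_nat a) = of_nat p * (K - of_nat (p*(b + mm*c))) - S"
      by (simp add: sum_subtractf S_def)
    finally show ?thesis by (simp add: algebra_simps)
  qed
  have mid: "(\<Sum>b<mm. \<Sum>a<p. (K - of_nat (a + p*(b + mm*c))) * (\<rho>^b * \<tau>^c)) = - (of_nat (p*p) * T) * \<tau>^c" for c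
  proof -
    have "(\<Sum>b<mm. \<Sum>a<p. (K - of_nat (a + p*(b + mm*c))) * (\<rho>^b * \<tau>^c)) =
      (\<Sum>b<mm. ((of_nat p * K - S - of_nat (p*p*mm*c)) * \<rho>^b - of_nat (p*p) * (of_nat b * \<rho>^b)) * \<tau>^c)"
      by (rule sum.cong[OF refl], rule inner)
    also have "\<dots> = ((of_nat p * K - S - of_nat (p*p*mm*c)) * (\<Sum>b<mm. \<rho>^b) - of_nat (p*p) * T) * \<tau>^c"
      by (simp add: T_def sum_distrib_left sum_distrib_right sum_subtractf sum.distrib algebra_simps)
    finally show ?thesis using r by simp
  qed
  have "(\<Sum>c<m'. \<Sum>b<mm. \<Sum>a<p. (K - of_nat (a + p*(b + mm*c))) * (\<rho>^b * \<tau>^c))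
     = (\<Sum>c<m'. - (of_nat (p*p) * T) * \<tau>^c)"
    by (rule sum.cong[OF refl], rule mid)
  also have "\<dots> = - (of_nat (p*p) * T) * (\<Sum>c<m'. \<tau>^c)" by (simp add: sum_distrib_left)
  finally show ?thesis using t by simp
qed


lemma two_sum_lessThan: "2 * (\<Sum>j<p. j) = p * (p - 1::nat)"
proof (induction p)
  case 0 show ?case by simp
next
  case (Suc p) then show ?case by (cases p) (simp_all add: algebra_simps)
qed

context vil begin

definition W :: "nat \<Rightarrow> (nat \<Rightarrow> nat) \<Rightarrow> complex" where
  "W Q x = (\<Sum>j<Q. of_nat (Q - 1 - j) * psi j x)"

definition Qs :: "nat \<Rightarrow> nat" where
  "Qs n = (\<Sum>i<n. MM (2*i))"

lemma MM_SS: "MM (Suc (Suc k)) = MM k * (m k * m (Suc k))"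
  by (simp add: vilM_Suc)

lemma MM_4: "4 * MM k \<le> MM (Suc (Suc k))"
proof -
  have "4 \<le> m k * m (Suc k)" using m2[of k] m2[of "Suc k"] mult_le_mono[of 2 "m k" 2 "m (Suc k)"] by simp
  then show ?thesis unfolding MM_SS by (simp add: mult.commute)
qed

lemma Qs_lt: "Qs n < MM (2*n)"
proof (induction n)
  case 0 then show ?case by (simp add: Qs_def vilM_def)
next
  case (Suc n)
  have "Qs (Suc n) = Qs n + MM (2*n)" by (simp add: Qs_def)
  also have "\<dots> < 4 * MM (2*n)" using Suc by simp
  also have "\<dots> \<le> MM (2 * Suc n)" using MM_4[of "2*n"] by simp
  finally show ?case .
qed

lemma rho_sum:
  assumes "x n \<noteq> 0" "x n < m n"
  shows "(\<Sum>b<m n. rr n x ^ b) = 0"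
proof -
  have "\<not> int (m n) dvd int (x n)"
    using assms by (auto dest: dvd_imp_le)
  then have "(\<Sum>y<m n. exp (2 * pi * \<i> * of_int (int (x n)) / of_nat (m n)) ^ y) = 0"
    by (intro root_sum) (auto simp: m_pos)
  then show ?thesis by (simp add: vil_r_def)
qed

lemma Z_lemma:
  assumes xs: "\<And>i. x i < m i" and low: "\<And>i. i < 2*k \<Longrightarrow> x i = 0"
    and nz1: "x (2*k) \<noteq> 0" and nz2: "x (Suc (2*k)) \<noteq> 0"
  shows "(\<Sum>a<MM (2*k+2). (K - of_nat a) * psi a x) = 0"
proof -
  define p where "p = MM (2*k)"
  define mm where "mm = m (2*k)"
  define m' where "m' = m (Suc (2*k))"
  define \<rho> where "\<rho> = rr (2*k) x"
  define \<tau> where "\<tau> = rr (Suc (2*k)) x"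
  have L: "MM (2*k+2) = p * (mm * m')" using MM_SS[of "2*k"] by (simp add: p_def mm_def m'_def)
  have "(\<Sum>a<MM (2*k+2). (K - of_nat a) * psi a x) =
     (\<Sum>u<mm * m'. \<Sum>a<p. (K - of_nat (a + p*u)) * psi (a + p*u) x)"
    unfolding L by (rule sum_blocks)
  also have "\<dots> = (\<Sum>u<mm * m'. \<Sum>a<p. (K - of_nat (a + p*u)) * psi (p*u) x)"
  proof (intro sum.cong refl)
    fix u a assume "a \<in> {..<p}"
    then have "a < p" by simp
    then have "psi (a + p*u) x = psi a x * psi (p*u) x" "psi a x = 1"
      unfolding p_def by (rule psi_split, rule psi_low) (use low in auto)
    then show "(K - of_nat (a + p*u)) * psi (a + p*u) x = (K - of_nat (a + p*u)) * psi (p*u) x" by simp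
  qed
  also have "\<dots> = (\<Sum>c<m'. \<Sum>b<mm. \<Sum>a<p. (K - of_nat (a + p*(b + mm*c))) * psi (p*(b + mm*c)) x)"
    by (rule sum_blocks)
  also have "\<dots> = (\<Sum>c<m'. \<Sum>b<mm. \<Sum>a<p. (K - of_nat (a + p*(b + mm*c))) * (\<rho>^b * \<tau>^c))"
  proof (intro sum.cong refl)
    fix c b a assume c: "c \<in> {..<m'}" and b: "b \<in> {..<mm}"
    have e: "p*(b + mm*c) = p*b + MM (Suc (2*k)) * c" by (simp add: p_def mm_def vilM_Suc algebra_simps)
    have "p * b < MM (Suc (2*k))" using b vilM_pos[of "2*k"] by (simp add: p_def mm_def vilM_Suc)
    then have "psi (p*b + MM (Suc (2*k)) * c) x = psi (p*b) x * psi (MM (Suc (2*k)) * c) x"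
      by (rule psi_split)
    also have "\<dots> = \<rho>^b * \<tau>^c"
      using b c unfolding p_def \<rho>_def \<tau>_def mm_def m'_def by (simp add: psi_block)
    finally show "(K - of_nat (a + p*(b + mm*c))) * psi (p*(b + mm*c)) x = (K - of_nat (a + p*(b + mm*c))) * (\<rho>^b * \<tau>^c)"
      by (simp add: e)
  qed
  also have "\<dots> = 0"
    by (rule Z_alg) (use rho_sum[of x "2*k"] rho_sum[of x "Suc (2*k)"] xs nz1 nz2 in
        \<open>auto simp: \<rho>_def \<tau>_def mm_def m'_def\<close>)
  finally show ?thesis .
qed


lemma W_reduce:
  assumes xs: "\<And>i. x i < m i" and low: "\<And>i. i < 2*k \<Longrightarrow> x i = 0"
    and nz1: "x (2*k) \<noteq> 0" and nz2: "x (Suc (2*k)) \<noteq> 0"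
    and Q': "Q' < MM (2*k+2)"
  shows "W (MM (2*k+2) * P + Q') x = psi (MM (2*k+2) * P) x * W Q' x"
proof -
  define L where "L = MM (2*k+2)"
  have W1: "W (L * P + Q') x = (\<Sum>j<L*P. of_nat (L*P + Q' - 1 - j) * psi j x)
      + (\<Sum>j<Q'. of_nat (L*P + Q' - 1 - (L*P + j)) * psi (L*P + j) x)"
    unfolding W_def by (rule sum_split)
  have "(\<Sum>j<L*P. of_nat (L*P + Q' - 1 - j) * psi j x)
     = (\<Sum>h<P. \<Sum>a<L. of_nat (L*P + Q' - 1 - (a + L*h)) * psi (a + L*h) x)"
    by (rule sum_blocks)
  also have "\<dots> = (\<Sum>h<P. psi (L*h) x * (\<Sum>a<L. (of_nat (L*P + Q' - 1 - L*h) - of_nat a) * psi a x))"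
  proof (rule sum.cong[OF refl])
    fix h assume "h \<in> {..<P}"
    then have hP: "L * Suc h \<le> L * P" by (intro mult_le_mono2) simp
    show "(\<Sum>a<L. of_nat (L*P + Q' - 1 - (a + L*h)) * psi (a + L*h) x) =
        psi (L*h) x * (\<Sum>a<L. (of_nat (L*P + Q' - 1 - L*h) - of_nat a) * psi a x)"
      unfolding sum_distrib_left
    proof (rule sum.cong[OF refl])
      fix a assume "a \<in> {..<L}"
      then have a: "a < L" by simp
      have ps: "psi (a + L*h) x = psi a x * psi (L*h) x"
        using a unfolding L_def by (rule psi_split)
      have e: "L*P + Q' - 1 - (a + L*h) = (L*P + Q' - 1 - L*h) - a" using a hP by simp
      have le: "a \<le> L*P + Q' - 1 - L*h" using a hP by simp
      have "(of_nat (L*P + Q' - 1 - (a + L*h)) :: complex) = of_nat ((L*P + Q' - 1 - L*h) - a)"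
        by (simp only: e)
      also have "\<dots> = of_nat (L*P + Q' - 1 - L*h) - of_nat a" by (rule of_nat_diff[OF le])
      finally have "(of_nat (L*P + Q' - 1 - (a + L*h)) :: complex) = of_nat (L*P + Q' - 1 - L*h) - of_nat a" .
      then show "of_nat (L*P + Q' - 1 - (a + L*h)) * psi (a + L*h) x =
          psi (L*h) x * ((of_nat (L*P + Q' - 1 - L*h) - of_nat a) * psi a x)"
        by (simp add: ps)
    qed
  qed
  also have "\<dots> = 0"
    using Z_lemma[OF xs low nz1 nz2] by (simp add: L_def)
  finally have first: "(\<Sum>j<L*P. of_nat (L*P + Q' - 1 - j) * psi j x) = 0" .
  have "(\<Sum>j<Q'. of_nat (L*P + Q' - 1 - (L*P + j)) * psi (L*P + j) x)
     = (\<Sum>j<Q'. psi (L*P) x * (of_nat (Q' - 1 - j) * psi j x))"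
  proof (rule sum.cong[OF refl])
    fix j assume "j \<in> {..<Q'}"
    then have "j < L" using Q' by (simp add: L_def)
    then have "psi (j + L*P) x = psi j x * psi (L*P) x" unfolding L_def by (rule psi_split)
    then show "of_nat (L*P + Q' - 1 - (L*P + j)) * psi (L*P + j) x = psi (L*P) x * (of_nat (Q' - 1 - j) * psi j x)"
      by (simp add: add.commute)
  qed
  then have second: "(\<Sum>j<Q'. of_nat (L*P + Q' - 1 - (L*P + j)) * psi (L*P + j) x) = psi (L*P) x * W Q' x"
    by (simp add: W_def sum_distrib_left)
  show ?thesis using W1 first second by (simp add: L_def)
qed

lemma W_base:
  assumes xs: "\<And>i. x i < m i" and low: "\<And>i. i < 2*k \<Longrightarrow> x i = 0"
    and nz1: "x (2*k) \<noteq> 0" and k1: "1 \<le> k"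
  shows "real (MM (2*k))^2 / 4 \<le> norm (W (Qs (Suc k)) x)"
proof -
  define p where "p = MM (2*k)"
  define Q where "Q = Qs k"
  have Qp: "Q < p" unfolding p_def Q_def by (rule Qs_lt)
  have p2: "2 \<le> p"
  proof -
    have "(2::nat)^1 \<le> 2^(2*k)" using k1 by (intro power_increasing) auto
    then show ?thesis using vilM_ge2[of "2*k"] by (simp add: p_def)
  qed
  have QS: "Qs (Suc k) = p + Q" by (simp add: Qs_def p_def Q_def)
  define \<rho> where "\<rho> = rr (2*k) x"
  have one: "psi j x = 1" if "j < p" for j
    using that unfolding p_def by (rule psi_low) (use low in auto)
  have W1: "W (p + Q) x = (\<Sum>j<p. of_nat (p + Q - 1 - j) * psi j x)
      + (\<Sum>j<Q. of_nat (p + Q - 1 - (p + j)) * psi (p + j) x)"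
    unfolding W_def by (rule sum_split)
  define R1 where "R1 = (\<Sum>j<p. p + Q - 1 - j)"
  define R2 where "R2 = (\<Sum>j<Q. Q - 1 - j)"
  have A1: "(\<Sum>j<p. of_nat (p + Q - 1 - j) * psi j x) = (of_nat R1 :: complex)"
    unfolding R1_def of_nat_sum by (rule sum.cong[OF refl]) (simp add: one)
  have A2: "(\<Sum>j<Q. of_nat (p + Q - 1 - (p + j)) * psi (p + j) x) = \<rho> * of_nat R2"
    unfolding R2_def of_nat_sum sum_distrib_left
  proof (rule sum.cong[OF refl])
    fix j assume "j \<in> {..<Q}"
    then have j: "j < p" using Qp by simp
    have "psi (j + p*1) x = psi j x * psi (p*1) x" using j unfolding p_def by (rule psi_split)
    also have "psi (p*1) x = \<rho>" unfolding p_def \<rho>_def using psi_block[of 1 "2*k" x] m2[of "2*k"] by simp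
    finally show "of_nat (p + Q - 1 - (p + j)) * psi (p + j) x = \<rho> * of_nat (Q - 1 - j)"
      using one[OF j] by (simp add: add.commute)
  qed
  have WW: "W (Qs (Suc k)) x = of_nat R1 + \<rho> * of_nat R2" using W1 A1 A2 QS by simp
  have nrho: "norm \<rho> = 1" by (simp add: \<rho>_def)
  have "real R1 - real R2 \<le> norm (W (Qs (Suc k)) x)"
    using norm_diff_ineq[of "of_nat R1 :: complex" "\<rho> * of_nat R2"] by (simp add: WW norm_mult nrho)
  moreover have "p^2 + 4 * R2 \<le> 4 * R1"
  proof -
    have "R1 = (\<Sum>j<p. Q + (p - Suc j))" unfolding R1_def by (rule sum.cong) auto
    also have "\<dots> = p * Q + (\<Sum>j<p. p - Suc j)" by (subst sum.distrib) simp
    also have "(\<Sum>j<p. p - Suc j) = (\<Sum>j<p. j)" using sum.nat_diff_reindex[of "\<lambda>j. j" p] by simp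
    finally have r1: "R1 = p * Q + (\<Sum>j<p. j)" .
    have "R2 \<le> (\<Sum>j<Q. Q)" unfolding R2_def by (rule sum_mono) auto
    also have "(\<Sum>j<Q. Q) = Q * Q" by simp
    finally have "R2 \<le> Q * Q" .
    moreover have "Q * Q \<le> p * Q" using Qp by (intro mult_le_mono1) simp
    ultimately have r2: "R2 \<le> p * Q" by (rule order_trans)
    have "p \<le> 2*(p-1)" using p2 by simp
    then have "p*p \<le> p*(2*(p-1))" by (rule mult_le_mono2)
    then have "p^2 \<le> 2 * (p * (p - 1))" by (simp add: power2_eq_square)
    then show ?thesis using r1 r2 two_sum_lessThan[of p] by linarith
  qed
  then have "real (p^2 + 4 * R2) \<le> real (4 * R1)" by (simp only: of_nat_le_iff)
  then have "real p ^ 2 / 4 \<le> real R1 - real R2" by simp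
  ultimately show ?thesis unfolding p_def by linarith
qed


lemma W_big:
  assumes xs: "\<And>i. x i < m i" and low: "\<And>i. i < 2*k \<Longrightarrow> x i = 0"
    and nz1: "x (2*k) \<noteq> 0" and nz2: "x (Suc (2*k)) \<noteq> 0"
    and k1: "1 \<le> k" and kA: "Suc k \<le> A"
  shows "real (MM (2*k))^2 / 4 \<le> norm (W (Qs A) x)"
proof -
  have split: "Qs A = Qs (Suc k) + (\<Sum>i\<in>{Suc k..<A}. MM (2*i))"
    unfolding Qs_def using sum.atLeastLessThan_concat[of 0 "Suc k" A "\<lambda>i. MM (2*i)"] kA
    by (simp add: atLeast0LessThan)
  have "MM (2*k+2) dvd (\<Sum>i\<in>{Suc k..<A}. MM (2*i))" by (intro dvd_sum vilM_dvd) auto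
  then obtain P where P: "(\<Sum>i\<in>{Suc k..<A}. MM (2*i)) = MM (2*k+2) * P" by (auto elim: dvdE)
  have QA: "Qs A = MM (2*k+2) * P + Qs (Suc k)" using split P by simp
  have lt: "Qs (Suc k) < MM (2*k+2)" using Qs_lt[of "Suc k"] by simp
  have "W (Qs A) x = psi (MM (2*k+2) * P) x * W (Qs (Suc k)) x"
    unfolding QA by (rule W_reduce[OF xs low nz1 nz2 lt])
  then have "norm (W (Qs A) x) = norm (W (Qs (Suc k)) x)" by (simp add: norm_mult)
  then show ?thesis using W_base[OF xs low nz1 k1] by simp
qed

lemma meas_cnj_psi: "(\<lambda>x. cnj (psi i x)) \<in> borel_measurable mu"
  by (rule measurable_compose[OF meas_psi borel_measurable_continuous_onI]) (intro continuous_intros)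

lemma integrable_psi_cnj: "integrable mu (\<lambda>x. psi j x * cnj (psi i x))"
proof -
  interpret P: prob_space mu by (rule prob_mu)
  show ?thesis
    by (rule P.integrable_const_bound[where B=1])
       (auto simp: norm_mult intro!: AE_I2 borel_measurable_times meas_psi meas_cnj_psi)
qed

lemma fourier_D:
  "vil_fourier m (\<lambda>x. vil_D m a x - vil_D m b x) i = (if i < a then 1 else 0) - (if i < b then 1 else 0)"
proof -
  have "vil_fourier m (\<lambda>x. vil_D m a x - vil_D m b x) i =
     (\<integral>x. (\<Sum>j<a. psi j x * cnj (psi i x)) - (\<Sum>j<b. psi j x * cnj (psi i x)) \<partial>mu)"
    unfolding vil_fourier_def vil_D_def by (simp add: left_diff_distrib sum_distrib_right)
  also have "\<dots> = (\<Sum>j<a. (\<integral>x. psi j x * cnj (psi i x) \<partial>mu)) - (\<Sum>j<b. (\<integral>x. psi j x * cnj (psi i x) \<partial>mu))"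
    by (simp add: integral_diff integral_sum integrable_psi_cnj)
  also have "\<dots> = (if i < a then 1 else 0) - (if i < b then 1 else 0)"
    by (simp add: orth)
  finally show ?thesis .
qed

lemma sigma_eq:
  fixes A :: nat
  defines "f \<equiv> (\<lambda>x. vil_D m (MM (2*A+1)) x - vil_D m (MM (2*A)) x)"
  shows "vil_sigma m (Qs (Suc A)) f x = rr (2*A) x * W (Qs A) x / of_nat (Qs (Suc A))"
proof -
  define q where "q = Qs (Suc A)"
  define M0 where "M0 = MM (2*A)"
  have q: "q = M0 + Qs A" by (simp add: q_def Qs_def M0_def)
  have QA: "Qs A < M0" unfolding M0_def by (rule Qs_lt)
  have qlt: "q < MM (2*A+1)"
  proof -
    have "q < 2 * M0" using q QA by simp
    also have "\<dots> \<le> M0 * m (2*A)" using m2[of "2*A"] by (simp add: mult.commute)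
    finally show ?thesis by (simp add: M0_def vilM_Suc)
  qed
  have M0lt: "M0 \<le> MM (2*A+1)" unfolding M0_def by (rule vilM_mono) simp
  have fou: "vil_fourier m f i = (if i < MM (2*A+1) then 1 else 0) - (if i < M0 then 1 else 0)" for i
    unfolding f_def M0_def by (rule fourier_D)
  have "(\<Sum>k<q. vil_S m k f x) = (\<Sum>i<q. of_nat (q - 1 - i) * (vil_fourier m f i * psi i x))"
    unfolding vil_S_def by (rule sum_tri)
  also have "\<dots> = (\<Sum>i<M0. of_nat (q - 1 - i) * (vil_fourier m f i * psi i x))
      + (\<Sum>j<Qs A. of_nat (q - 1 - (M0 + j)) * (vil_fourier m f (M0 + j) * psi (M0 + j) x))"
    unfolding q by (rule sum_split)
  also have "(\<Sum>i<M0. of_nat (q - 1 - i) * (vil_fourier m f i * psi i x)) = 0"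
    using M0lt by (intro sum.neutral) (auto simp: fou)
  also have "(\<Sum>j<Qs A. of_nat (q - 1 - (M0 + j)) * (vil_fourier m f (M0 + j) * psi (M0 + j) x))
      = rr (2*A) x * W (Qs A) x"
    unfolding W_def sum_distrib_left
  proof (rule sum.cong[OF refl])
    fix j assume "j \<in> {..<Qs A}"
    then have j: "j < Qs A" by simp
    have "M0 + j < MM (2*A+1)" using j q qlt by simp
    then have fj: "vil_fourier m f (M0 + j) = 1" by (simp add: fou)
    have "psi (j + M0 * 1) x = psi j x * psi (M0 * 1) x"
      using j QA unfolding M0_def by (intro psi_split) simp
    also have "psi (M0 * 1) x = rr (2*A) x" unfolding M0_def using psi_block[of 1 "2*A" x] m2[of "2*A"] by simp
    finally have ps: "psi (M0 + j) x = psi j x * rr (2*A) x" by (simp add: add.commute)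
    have "q - 1 - (M0 + j) = Qs A - 1 - j" using q by simp
    then show "of_nat (q - 1 - (M0 + j)) * (vil_fourier m f (M0 + j) * psi (M0 + j) x) =
        rr (2*A) x * (of_nat (Qs A - 1 - j) * psi j x)"
      by (simp add: fj ps)
  qed
  finally show ?thesis unfolding vil_sigma_def q_def by simp
qed


definition XX :: "nat \<Rightarrow> nat \<Rightarrow> nat set" where
  "XX k i = (if i < 2*k then {0} else {1..<m i})"

definition EE :: "nat \<Rightarrow> (nat \<Rightarrow> nat) set" where
  "EE k = prod_emb UNIV UM {..<2*k+2} (PiE {..<2*k+2} (XX k))"

lemma EE_sets: "EE k \<in> sets mu"
  unfolding EE_def mu_eq
  by (intro measurable_prod_emb sets_PiM_I_finite) (auto simp: XX_def sets_uniform_count_measure m_pos)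

lemma EE_sub: "EE k \<subseteq> space mu"
  unfolding EE_def mu_eq by simp

lemma EE_mem:
  assumes "x \<in> EE k"
  shows "\<And>i. x i < m i" "\<And>i. i < 2*k \<Longrightarrow> x i = 0" "x (2*k) \<noteq> 0" "x (Suc (2*k)) \<noteq> 0"
proof -
  have sp: "\<forall>i. x i \<in> {0..<m i}" and r: "restrict x {..<2*k+2} \<in> PiE {..<2*k+2} (XX k)"
    using assms by (auto simp: EE_def prod_emb_iff space_uniform_count_measure)
  have X: "x i \<in> XX k i" if "i < 2*k+2" for i
    using r that by (auto simp: PiE_iff)
  show "\<And>i. x i < m i" using sp by auto
  show "x i = 0" if "i < 2*k" for i
  proof -
    have "x i \<in> XX k i" using that by (intro X) simp
    then show ?thesis using that by (simp add: XX_def)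
  qed
  show "x (2*k) \<noteq> 0" using X[of "2*k"] by (auto simp: XX_def)
  show "x (Suc (2*k)) \<noteq> 0" using X[of "Suc (2*k)"] by (auto simp: XX_def)
qed

lemma EE_disj: assumes "x \<in> EE k" "x \<in> EE k'" "k \<noteq> k'" shows False
proof (cases "k < k'")
  case True
  then have "x (2*k) = 0" using EE_mem(2)[OF assms(2), of "2*k"] by simp
  then show False using EE_mem(3)[OF assms(1)] by simp
next
  case False
  then have "k' < k" using assms(3) by simp
  then have "x (2*k') = 0" using EE_mem(2)[OF assms(1), of "2*k'"] by simp
  then show False using EE_mem(3)[OF assms(2)] by simp
qed

lemma measure_EE: "1 / (4 * real (MM (2*k))) \<le> measure mu (EE k)"
proof -
  have mUM: "measure (UM i) (XX k i) = real (card (XX k i)) / real (m i)" for i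
    by (subst measure_uniform_count_measure) (auto simp: XX_def m_pos)
  have "measure mu (EE k) = (\<Prod>i<2*k+2. measure (UM i) (XX k i))"
    unfolding EE_def mu_eq
    by (rule PP.measure_PiM_emb) (auto simp: XX_def sets_uniform_count_measure m_pos)
  also have "\<dots> = (\<Prod>i<2*k. measure (UM i) (XX k i)) * measure (UM (2*k)) (XX k (2*k))
      * measure (UM (Suc (2*k))) (XX k (Suc (2*k)))"
    by (simp add: prod.lessThan_Suc)
  also have "(\<Prod>i<2*k. measure (UM i) (XX k i)) = (\<Prod>i<2*k. 1 / real (m i))"
    by (rule prod.cong[OF refl], subst mUM) (simp add: XX_def)
  also have "\<dots> = 1 / real (MM (2*k))"
    by (simp add: vilM_def prod_dividef)
  also have "measure (UM (2*k)) (XX k (2*k)) = real (m (2*k) - 1) / real (m (2*k))"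
    by (subst mUM) (simp add: XX_def)
  also have "measure (UM (Suc (2*k))) (XX k (Suc (2*k))) = real (m (Suc (2*k)) - 1) / real (m (Suc (2*k)))"
    by (subst mUM) (simp add: XX_def)
  finally have e: "measure mu (EE k) = 1 / real (MM (2*k)) * (real (m (2*k) - 1) / real (m (2*k)))
      * (real (m (Suc (2*k)) - 1) / real (m (Suc (2*k))))" .
  have h: "1/2 \<le> real (n - 1) / real n" if "2 \<le> n" for n :: nat
  proof -
    have "real n \<le> 2 * real (n - 1)" using that by (simp add: of_nat_diff)
    then show ?thesis using that by (simp add: field_simps)
  qed
  have M: "0 < real (MM (2*k))" using vilM_pos by simp
  have "1 / (4 * real (MM (2*k))) = 1 / real (MM (2*k)) * (1/2) * (1/2)" by simp
  also have "\<dots> \<le> measure mu (EE k)"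
    unfolding e using h[OF m2[of "2*k"]] h[OF m2[of "Suc (2*k)"]] M
    by (intro mult_mono) (auto simp: m2)
  finally show ?thesis .
qed

lemma main_loc:
  fixes A :: nat
  assumes A3: "3 \<le> A"
  shows "1/48 * real A / sqrt (real (MM (2*A))) \<le>
    (\<integral>x. norm (vil_sigma m (\<Sum>i\<le>A. MM (2*i)) (\<lambda>x. vil_D m (MM (2*A+1)) x - vil_D m (MM (2*A)) x) x) powr (1/2) \<partial>mu)"
proof -
  interpret P: prob_space mu by (rule prob_mu)
  define q where "q = Qs (Suc A)"
  define f where "f = (\<lambda>x. vil_D m (MM (2*A+1)) x - vil_D m (MM (2*A)) x)"
  have qeq: "(\<Sum>i\<le>A. MM (2*i)) = q" by (simp add: q_def Qs_def lessThan_Suc_atMost)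
  have q: "q = MM (2*A) + Qs A" by (simp add: q_def Qs_def)
  have qpos: "0 < q" using q vilM_pos[of "2*A"] by simp
  have q4: "real q \<le> 4 * real (MM (2*A))" using q Qs_lt[of A] by simp
  define G where "G x = sqrt (norm (W (Qs A) x) / real q)" for x
  have gG: "norm (vil_sigma m q f x) powr (1/2) = G x" for x
    unfolding G_def f_def q_def sigma_eq by (simp add: norm_mult norm_divide powr_half_sqrt)
  define cst where "cst k = real (MM (2*k)) / (2 * sqrt (real q))" for k
  define h where "h x = (\<Sum>k\<in>{1..<A}. cst k * indicator (EE k) x)" for x
  have Gk: "cst k \<le> G x" if "x \<in> EE k" "1 \<le> k" "k < A" for x k
  proof -
    have "real (MM (2*k))^2 / 4 \<le> norm (W (Qs A) x)"
      using W_big[OF EE_mem[OF that(1)] that(2)] that(3) by simp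
    then have "real (MM (2*k))^2 / (4 * real q) \<le> norm (W (Qs A) x) / real q"
      using qpos by (simp add: divide_right_mono[of _ _ "real q", simplified] field_simps)
    then have "sqrt (real (MM (2*k))^2 / (4 * real q)) \<le> G x"
      unfolding G_def by (rule real_sqrt_le_mono)
    moreover have "sqrt (real (MM (2*k))^2 / (4 * real q)) = cst k"
      unfolding cst_def by (simp add: real_sqrt_divide real_sqrt_mult)
    ultimately show ?thesis by simp
  qed
  have Gnn: "0 \<le> G x" for x by (simp add: G_def)
  have hG: "h x \<le> G x" for x
  proof (cases "\<exists>k\<in>{1..<A}. x \<in> EE k")
    case True
    then obtain k where k: "k \<in> {1..<A}" "x \<in> EE k" by blast
    have "h x = cst k * indicator (EE k) x + (\<Sum>k'\<in>{1..<A} - {k}. cst k' * indicator (EE k') x)"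
      unfolding h_def by (rule sum.remove) (use k(1) in auto)
    also have "(\<Sum>k'\<in>{1..<A} - {k}. cst k' * indicator (EE k') x) = 0"
      using EE_disj[OF k(2)] by (intro sum.neutral) (auto simp: indicator_def)
    finally have "h x = cst k" using k(2) by simp
    then show ?thesis using Gk[OF k(2)] k(1) by simp
  next
    case False
    then have "h x = 0" unfolding h_def by (intro sum.neutral) (auto simp: indicator_def)
    then show ?thesis using Gnn[of x] by simp
  qed
  have measW: "(\<lambda>x. W (Qs A) x) \<in> borel_measurable mu"
    unfolding W_def by (intro borel_measurable_sum borel_measurable_times borel_measurable_const meas_psi)
  have measG: "G \<in> borel_measurable mu"
    unfolding G_def[abs_def] using measW by measurable
  define BW where "BW = (\<Sum>j<Qs A. real (Qs A - 1 - j))"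
  have bW: "norm (W (Qs A) x) \<le> BW" for x
  proof -
    have "norm (W (Qs A) x) \<le> (\<Sum>j<Qs A. norm (of_nat (Qs A - 1 - j) * psi j x))"
      unfolding W_def by (rule norm_sum)
    also have "\<dots> = BW" unfolding BW_def
      by (intro sum.cong refl) (simp only: norm_mult norm_psi norm_of_nat mult_1_right)
    finally show ?thesis .
  qed
  have intG: "integrable mu G"
  proof (rule P.integrable_const_bound[where B="sqrt (BW / real q)"])
    show "AE x in mu. norm (G x) \<le> sqrt (BW / real q)"
      using bW qpos by (intro AE_I2) (auto simp: G_def intro!: real_sqrt_le_mono divide_right_mono)
  qed (rule measG)
  have inth: "integral\<^sup>L mu h = (\<Sum>k\<in>{1..<A}. cst k * measure mu (EE k))"
  proof -
    have "integral\<^sup>L mu h = (\<Sum>k\<in>{1..<A}. integral\<^sup>L mu (\<lambda>x. cst k * indicator (EE k) x))"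
      unfolding h_def[abs_def]
      by (rule Bochner_Integration.integral_sum[where I="{1..<A}" and f="\<lambda>k x. cst k * indicator (EE k) x"])
         (auto intro!: integrable_mult_right integrable_real_indicator EE_sets simp: P.emeasure_eq_measure)
    also have "\<dots> = (\<Sum>k\<in>{1..<A}. cst k * measure mu (EE k))"
      using EE_sub by (simp add: Int_absorb2)
    finally show ?thesis .
  qed
  have "(\<Sum>k\<in>{1..<A}. 1 / (8 * sqrt (real q))) \<le> (\<Sum>k\<in>{1..<A}. cst k * measure mu (EE k))"
  proof (rule sum_mono)
    fix k assume "k \<in> {1..<A}"
    have M: "0 < real (MM (2*k))" using vilM_pos by simp
    have sq: "0 < sqrt (real q)" using qpos by simp
    have "1 / (8 * sqrt (real q)) = cst k * (1 / (4 * real (MM (2*k))))"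
      unfolding cst_def using M sq by (simp add: field_simps)
    also have "\<dots> \<le> cst k * measure mu (EE k)"
      using measure_EE[of k] M sq by (intro mult_left_mono) (auto simp: cst_def)
    finally show "1 / (8 * sqrt (real q)) \<le> cst k * measure mu (EE k)" .
  qed
  then have hbound: "real (A - 1) / (8 * sqrt (real q)) \<le> integral\<^sup>L mu h" by (simp add: inth)
  have "integral\<^sup>L mu h \<le> integral\<^sup>L mu G"
    by (rule integral_mono'[OF intG]) (auto simp: hG Gnn)
  moreover have "1/48 * real A / sqrt (real (MM (2*A))) \<le> real (A - 1) / (8 * sqrt (real q))"
  proof -
    have M: "0 < sqrt (real (MM (2*A)))" using vilM_pos by simp
    have sq: "0 < sqrt (real q)" using qpos by simp
    have "sqrt (real q) \<le> sqrt (4 * real (MM (2*A)))" using q4 by (rule real_sqrt_le_mono)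
    also have "\<dots> = 2 * sqrt (real (MM (2*A)))" by (simp add: real_sqrt_mult)
    finally have sqle: "sqrt (real q) \<le> 2 * sqrt (real (MM (2*A)))" .
    have A1: "real A \<le> 3 * real (A - 1)" using A3 by (simp add: of_nat_diff)
    have "1/48 * real A / sqrt (real (MM (2*A))) = real A / (48 * sqrt (real (MM (2*A))))" by simp
    also have "\<dots> \<le> 3 * real (A - 1) / (48 * sqrt (real (MM (2*A))))"
      using A1 M by (intro divide_right_mono) auto
    also have "\<dots> = real (A - 1) / (8 * (2 * sqrt (real (MM (2*A)))))" by simp
    also have "\<dots> \<le> real (A - 1) / (8 * sqrt (real q))"
      using sqle sq M by (intro divide_left_mono) (auto intro: mult_pos_pos)
    finally show ?thesis .
  qed
  moreover have "integral\<^sup>L mu G = (\<integral>x. norm (vil_sigma m q f x) powr (1/2) \<partial>mu)"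
    by (simp add: gG)
  ultimately show ?thesis using hbound unfolding qeq f_def by linarith
qed

end


theorem mainTheorem5:
  fixes m :: "nat \<Rightarrow> nat"
  assumes "\<And>k. m k \<ge> 2"
    and "\<exists>B. \<forall>k. m k \<le> B"
  shows "\<exists>c>0. \<forall>A::nat. A \<ge> 3 \<longrightarrow>
    (let q = (\<Sum>i\<le>A. vilM m (2 * i));
         f = (\<lambda>x. vil_D m (vilM m (2 * A + 1)) x - vil_D m (vilM m (2 * A)) x)
     in (\<integral>x. norm (vil_sigma m q f x) powr (1/2) \<partial>vil_measure m)
          \<ge> c * real A / sqrt (real (vilM m (2 * A))))"
proof -
  interpret vil m by unfold_locales (rule assms(1))
  show ?thesis
    unfolding Let_def
  proof (intro exI[of _ "1/48"] conjI allI impI)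
    fix A :: nat assume "3 \<le> A"
    then show "1/48 * real A / sqrt (real (vilM m (2 * A))) \<le>
      (\<integral>x. norm (vil_sigma m (\<Sum>i\<le>A. vilM m (2 * i))
         (\<lambda>x. vil_D m (vilM m (2 * A + 1)) x - vil_D m (vilM m (2 * A)) x) x) powr (1/2) \<partial>vil_measure m)"
      by (rule main_loc)
  qed simp
qed

end
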